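(* Let $P \subset \mathbb{R}^2$ be a finite point set satisfying the standing condition, $\varepsilon \in (0,1)$, and let $G$ be the directed graph defined in the context. If $C^*$ is a directed cycle of $G$ with the minimum number of vertices, then the vertex set of $C^*$ is an $\varepsilon$-regret set of $P$ of minimum cardinality among all $\varepsilon$-regret sets of $P$ (i.e., an optimal solution of GRMR for $P$ and $\varepsilon$).
   Context: For finite $Q \subset \mathbb{R}^2$ and unit $x$, $\omega(x,Q)=\max_{p\in Q}\langle p,x\rangle$. Standing condition: $\omega(x,P)>0$ for all $x\in\mathbb{S}^1$. Regret ratio $l_x(Q) = 1-\omega(x,Q)/\omega(x,P)$, maximum regret ratio $l(Q)=\max_{x\in\mathbb{S}^1} l_x(Q)$; $Q\subseteq P$ is an $\varepsilon$-regret set if $l(Q)\le\varepsilon$. The Voronoi cell of $p$ is $R(p)=\{x\neq 0 : \langle p,x\rangle\ge\omega(x,P)\}$; the extreme points $X=\{t_1,\dots,t_m\}$ are the points with $R(p)\neq\varnothing$ (the convex hull vertices), indexed counterclockwise by polar angle, cyclically. For each $i$, $x^*_i\in\mathbb{S}^1$ is the unit vector with $\langle t_i,x\rangle=\langle t_{i+1},x\rangle$ and $\langle t_i,x\rangle>0$. Candidate set: $S = X\cup\{p\in P\setminus X : \exists i,\ \langle p,x^*_i\rangle\ge(1-\varepsilon)\langle t_i,x^*_i\rangle\}$, indexed $s_1,\dots,s_{|S|}$ counterclockwise by polar angle. For points $a,b$, $X[a,b]$ denotes the extreme points whose polar angles lie in the counterclockwise angular range from the angle of $a$ to the angle of $b$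 (inclusive, wrapping through $2\pi$ if needed). The directed graph $G$ has vertex set $S$, and for $i\neq j$ there is an edge $s_i\to s_j$ iff the counterclockwise angle from $s_i$ to $s_j$ is less than $\pi$ and $l_{ij}\le\varepsilon$, where $l_{ij}=\max_{t\in X[s_i,s_j]}\bigl(1-\langle s_i,x^*\rangle/\langle t,x^*\rangle\bigr)$ (taken as $0$ if $X[s_i,s_j]$ is empty) and $x^*\in\mathbb{S}^1$ is the unit vector with $\langle s_i,x^*\rangle=\langle s_j,x^*\rangle$ and $\langle s_i,x^*\rangle\ge 0$. *)

theory Defs
  imports "HOL-Analysis.Analysis"
begin

text \<open>Points of the plane are represented as complex numbers; the inner product
  is the standard one (x \<bullet> y = Re x * Re y + Im x * Im y), and the polar angle
  of a nonzero point is Arg.\<close>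

definition omega :: "complex \<Rightarrow> complex set \<Rightarrow> real" where
  "omega x Q = Max ((\<lambda>p. p \<bullet> x) ` Q)"

definition regret_ratio :: "complex set \<Rightarrow> complex \<Rightarrow> complex set \<Rightarrow> real" where
  "regret_ratio P x Q = 1 - omega x Q / omega x P"

definition max_regret :: "complex set \<Rightarrow> complex set \<Rightarrow> real" where
  "max_regret P Q = (SUP x\<in>sphere 0 1. regret_ratio P x Q)"

definition regret_set :: "complex set \<Rightarrow> real \<Rightarrow> complex set \<Rightarrow> bool" where
  "regret_set P eps Q \<longleftrightarrow> Q \<noteq> {} \<and> Q \<subseteq> P \<and> max_regret P Q \<le> eps"

definition standing_cond :: "complex set \<Rightarrow> bool" where
  "standing_cond P \<longleftrightarrow> (\<forall>x\<in>sphere 0 1. omega x P > 0)"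

definition voronoi :: "complex set \<Rightarrow> complex \<Rightarrow> complex set" where
  "voronoi P p = {x. x \<noteq> 0 \<and> p \<bullet> x \<ge> omega x P}"

definition extreme_pts :: "complex set \<Rightarrow> complex set" where
  "extreme_pts P = {p\<in>P. voronoi P p \<noteq> {}}"

definition ccw_angle :: "complex \<Rightarrow> complex \<Rightarrow> real" where
  "ccw_angle a b = (let d = Arg b - Arg a in if d < 0 then d + 2 * pi else d)"

definition ccw_succ :: "complex set \<Rightarrow> complex \<Rightarrow> complex \<Rightarrow> bool" where
  "ccw_succ P t t' \<longleftrightarrow> t \<in> extreme_pts P \<and> t' \<in> extreme_pts P \<and> t' \<noteq> t \<and>
     (\<forall>t''\<in>extreme_pts P. t'' \<noteq> t \<longrightarrow> ccw_angle t t' \<le> ccw_angle t t'')"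

definition candidates :: "complex set \<Rightarrow> real \<Rightarrow> complex set" where
  "candidates P eps = extreme_pts P \<union>
     {p \<in> P - extreme_pts P. \<exists>t t' x. ccw_succ P t t' \<and> norm x = 1 \<and>
        t \<bullet> x = t' \<bullet> x \<and> t \<bullet> x > 0 \<and> p \<bullet> x \<ge> (1 - eps) * (t \<bullet> x)}"

definition ext_range :: "complex set \<Rightarrow> complex \<Rightarrow> complex \<Rightarrow> complex set" where
  "ext_range P a b = {t \<in> extreme_pts P. ccw_angle a t \<le> ccw_angle a b}"

definition xstar :: "complex \<Rightarrow> complex \<Rightarrow> complex" where
  "xstar a b = (SOME x. norm x = 1 \<and> a \<bullet> x = b \<bullet> x \<and> a \<bullet> x \<ge> 0)"

definition l_edge :: "complex set \<Rightarrow> complex \<Rightarrow> complex \<Rightarrow> real" where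
  "l_edge P a b = (if ext_range P a b = {} then 0
     else Max ((\<lambda>t. 1 - (a \<bullet> xstar a b) / (t \<bullet> xstar a b)) ` ext_range P a b))"

definition G_edge :: "complex set \<Rightarrow> real \<Rightarrow> complex \<Rightarrow> complex \<Rightarrow> bool" where
  "G_edge P eps a b \<longleftrightarrow> a \<in> candidates P eps \<and> b \<in> candidates P eps \<and> a \<noteq> b \<and>
     0 < ccw_angle a b \<and> ccw_angle a b < pi \<and> l_edge P a b \<le> eps"

definition G_cycle :: "complex set \<Rightarrow> real \<Rightarrow> complex list \<Rightarrow> bool" where
  "G_cycle P eps cs \<longleftrightarrow> cs \<noteq> [] \<and> distinct cs \<and> set cs \<subseteq> candidates P eps \<and>
     (\<forall>i<length cs. G_edge P eps (cs ! i) (cs ! ((i + 1) mod length cs)))"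

end

theory Submission
  imports Defs
begin

definition cr :: "complex \<Rightarrow> complex \<Rightarrow> real" where
  "cr a b = Re a * Im b - Im a * Re b"

lemma Re_Arg: "Re z = cmod z * cos (Arg z)" and Im_Arg: "Im z = cmod z * sin (Arg z)"
  by (metis Re_rcis rcis_cmod_Arg, metis Im_rcis rcis_cmod_Arg)

lemma cross_sin: "cr z w = cmod z * cmod w * sin (Arg w - Arg z)"
  unfolding cr_def sin_diff
  by (subst (1 2) Re_Arg, subst (1 2) Im_Arg) (simp add: algebra_simps)

lemma ccw_bounds: "0 \<le> ccw_angle a b" "ccw_angle a b < 2*pi"
  using Arg_bounded[of a] Arg_bounded[of b] unfolding ccw_angle_def Let_def by auto

lemma ccw_sin: "sin (ccw_angle a b) = sin (Arg b - Arg a)"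
  unfolding ccw_angle_def Let_def by (simp add: sin_add)

lemma ccw_add: "ccw_angle a b \<le> ccw_angle a c \<Longrightarrow> ccw_angle b c = ccw_angle a c - ccw_angle a b"
  using Arg_bounded[of a] Arg_bounded[of b] Arg_bounded[of c] unfolding ccw_angle_def Let_def
  by (auto split: if_splits)

lemma cross_pos_iff:
  assumes "a \<noteq> 0" "b \<noteq> 0"
  shows "cr a b > 0 \<longleftrightarrow> 0 < ccw_angle a b \<and> ccw_angle a b < pi"
proof -
  have "cr a b = cmod a * cmod b * sin (ccw_angle a b)" by (simp add: cross_sin ccw_sin)
  moreover have "cmod a * cmod b > 0" using assms by simp
  ultimately have e: "cr a b > 0 \<longleftrightarrow> sin (ccw_angle a b) > 0"
    by (metis mult_pos_pos zero_less_mult_pos)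
  show ?thesis
  proof
    assume "cr a b > 0"
    hence s: "sin (ccw_angle a b) > 0" using e by simp
    have "ccw_angle a b \<noteq> 0" using s by auto
    moreover have "\<not> (pi \<le> ccw_angle a b)"
    proof
      assume "pi \<le> ccw_angle a b"
      hence "sin (ccw_angle a b) \<le> 0" using ccw_bounds[of a b] by (intro sin_le_zero) auto
      thus False using s by simp
    qed
    ultimately show "0 < ccw_angle a b \<and> ccw_angle a b < pi" using ccw_bounds[of a b] by auto
  next
    assume "0 < ccw_angle a b \<and> ccw_angle a b < pi"
    thus "cr a b > 0" using e sin_gt_zero by auto
  qed
qed

lemma lagrange: "(cmod u)^2 * (v \<bullet> x) = (u \<bullet> v) * (u \<bullet> x) + cr u v * cr u x"
  unfolding inner_complex_def cr_def cmod_power2 by (simp add: algebra_simps power2_eq_square)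

lemma lagrange2: "(u \<bullet> x)^2 + (cr u x)^2 = (cmod u)^2 * (cmod x)^2"
  unfolding inner_complex_def cr_def cmod_power2 by (simp add: algebra_simps power2_eq_square)

lemma cramer_inner: "cr a b * (t \<bullet> x) = cr t b * (a \<bullet> x) + cr a t * (b \<bullet> x)"
  unfolding inner_complex_def cr_def by (simp add: algebra_simps)

lemma cr_rot: "p \<bullet> (\<i> * t) = cr t p"
  unfolding inner_complex_def cr_def by simp

lemma cr_normal: "v \<bullet> (- \<i> * (b - a)) = - cr (b - a) v"
  unfolding inner_complex_def cr_def by (simp add: algebra_simps)

lemma cr_mult: "cr (z * c) (w * c) = (cmod c)^2 * cr z w"
  unfolding cr_def cmod_power2 by (simp add: algebra_simps power2_eq_square)

lemma cr_swap: "cr a b = - cr b a" unfolding cr_def by simp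

lemma cone:
  assumes "a \<noteq> 0" "b \<noteq> 0" "0 < ccw_angle a b" "ccw_angle a b < pi" "ccw_angle a t \<le> ccw_angle a b"
  shows "cr a b > 0" "cr a t \<ge> 0" "cr t b \<ge> 0"
    "\<exists>\<alpha> \<beta>. \<alpha> \<ge> 0 \<and> \<beta> \<ge> 0 \<and> (\<forall>x. t \<bullet> x = \<alpha> * (a \<bullet> x) + \<beta> * (b \<bullet> x))"
proof -
  show ab: "cr a b > 0" using cross_pos_iff assms by blast
  have "cr a t = cmod a * cmod t * sin (ccw_angle a t)" by (simp add: cross_sin ccw_sin)
  moreover have "sin (ccw_angle a t) \<ge> 0" using assms ccw_bounds[of a t] by (intro sin_ge_zero) auto
  ultimately show at: "cr a t \<ge> 0" by simp
  have "cr t b = cmod t * cmod b * sin (ccw_angle t b)" by (simp add: cross_sin ccw_sin)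
  moreover have "ccw_angle t b = ccw_angle a b - ccw_angle a t" using ccw_add assms(5) by blast
  moreover have "sin (ccw_angle a b - ccw_angle a t) \<ge> 0" using assms ccw_bounds[of a t] by (intro sin_ge_zero) auto
  ultimately show tb: "cr t b \<ge> 0" by simp
  show "\<exists>\<alpha> \<beta>. \<alpha> \<ge> 0 \<and> \<beta> \<ge> 0 \<and> (\<forall>x. t \<bullet> x = \<alpha> * (a \<bullet> x) + \<beta> * (b \<bullet> x))"
  proof (intro exI conjI allI)
    show "cr t b / cr a b \<ge> 0" "cr a t / cr a b \<ge> 0" using ab at tb by auto
    fix x
    have "cr a b * (t \<bullet> x) = cr t b * (a \<bullet> x) + cr a t * (b \<bullet> x)" by (rule cramer_inner)
    thus "t \<bullet> x = cr t b / cr a b * (a \<bullet> x) + cr a t / cr a b * (b \<bullet> x)"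
      using ab by (simp add: field_simps)
  qed
qed

lemma arg_min_ex: "finite S \<Longrightarrow> S \<noteq> {} \<Longrightarrow> \<exists>x\<in>S. \<forall>y\<in>S. (f x :: real) \<le> f y"
proof (induction S rule: finite_ne_induct)
  case (singleton x) thus ?case by auto
next
  case (insert x F)
  then obtain m where "m \<in> F" "\<forall>y\<in>F. f m \<le> f y" by auto
  thus ?case by (cases "f x \<le> f m") force+
qed

lemma arg_max_ex: "finite S \<Longrightarrow> S \<noteq> {} \<Longrightarrow> \<exists>x\<in>S. \<forall>y\<in>S. (f y :: real) \<le> f x"
  using arg_min_ex[of S "\<lambda>x. - f x"] by auto

lemma omega_ge: "finite Q \<Longrightarrow> p \<in> Q \<Longrightarrow> p \<bullet> x \<le> omega x Q"
  unfolding omega_def by (intro Max_ge) auto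

lemma omega_attained: "finite Q \<Longrightarrow> Q \<noteq> {} \<Longrightarrow> \<exists>p\<in>Q. p \<bullet> x = omega x Q"
  unfolding omega_def using Max_in[of "(\<lambda>p. p \<bullet> x) ` Q"] by (metis finite_imageI image_iff image_is_empty)

lemma omega_le: "finite Q \<Longrightarrow> Q \<noteq> {} \<Longrightarrow> (\<forall>p\<in>Q. p \<bullet> x \<le> c) \<Longrightarrow> omega x Q \<le> c"
  using omega_attained by metis

lemma omega_scale:
  assumes "finite Q" "Q \<noteq> {}" "c \<ge> 0"
  shows "omega (c *\<^sub>R x) Q = c * omega x Q"
proof (rule antisym)
  show "omega (c *\<^sub>R x) Q \<le> c * omega x Q"
    using assms by (intro omega_le) (auto intro!: mult_left_mono omega_ge)
  obtain p where "p \<in> Q" "p \<bullet> x = omega x Q" using omega_attained assms by metis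
  thus "c * omega x Q \<le> omega (c *\<^sub>R x) Q"
    using omega_ge[OF assms(1) \<open>p\<in>Q\<close>, of "c *\<^sub>R x"] by simp
qed

lemma arg_eq_scale:
  assumes "Arg s = Arg t" "t \<noteq> 0"
  shows "s = (cmod s / cmod t) *\<^sub>R t"
proof -
  have c: "cmod t \<noteq> 0" using assms by simp
  have "Re s = cmod s / cmod t * Re t" using c Re_Arg[of s] Re_Arg[of t] assms(1) by simp
  moreover have "Im s = cmod s / cmod t * Im t" using c Im_Arg[of s] Im_Arg[of t] assms(1) by simp
  ultimately show ?thesis by (simp add: complex_eq_iff)
qed

locale setting =
  fixes P :: "complex set" and eps :: real
  assumes finP: "finite P" and neP: "P \<noteq> {}" and stand: "standing_cond P"
    and eps0: "0 < eps" and eps1: "eps < 1"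
begin

lemma omega_pos: "x \<noteq> 0 \<Longrightarrow> omega x P > 0"
proof -
  assume "x \<noteq> 0"
  hence "sgn x \<in> sphere 0 1" by (simp add: norm_sgn)
  hence "omega (sgn x) P > 0" using stand unfolding standing_cond_def by blast
  moreover have "x = cmod x *\<^sub>R sgn x" unfolding sgn_eq scaleR_conv_of_real using \<open>x\<noteq>0\<close> by simp
  hence "omega x P = cmod x * omega (sgn x) P" using omega_scale[OF finP neP, of "cmod x" "sgn x"] by simp
  ultimately show ?thesis using \<open>x\<noteq>0\<close> by simp
qed

abbreviation "E \<equiv> extreme_pts P"

lemma ext_sub: "E \<subseteq> P" unfolding extreme_pts_def by auto
lemma finE: "finite E" using ext_sub finP finite_subset by blast

lemma ext_max: "x \<noteq> 0 \<Longrightarrow> \<exists>t\<in>E. t \<bullet> x = omega x P"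
proof -
  assume "x \<noteq> 0"
  obtain p where "p \<in> P" "p \<bullet> x = omega x P" using omega_attained finP neP by metis
  hence "x \<in> voronoi P p" using \<open>x\<noteq>0\<close> unfolding voronoi_def by auto
  thus ?thesis using \<open>p \<in> P\<close> \<open>p \<bullet> x = omega x P\<close> unfolding extreme_pts_def by blast
qed

lemma ext_dir: "t \<in> E \<Longrightarrow> \<exists>z. z \<noteq> 0 \<and> t \<bullet> z \<ge> omega z P"
  unfolding extreme_pts_def voronoi_def by auto

lemma ext_nz: "t \<in> E \<Longrightarrow> t \<noteq> 0"
  using ext_dir omega_pos by fastforce

lemma ext_ray:
  assumes "t \<in> E" "s \<in> E" "s = c *\<^sub>R t" "c > 0"
  shows "c = 1"
proof -
  obtain z where z: "z \<noteq> 0" "t \<bullet> z \<ge> omega z P" using ext_dir assms(1) by blast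
  have "s \<bullet> z \<le> omega z P" using omega_ge finP assms(2) ext_sub by blast
  hence "c * (t \<bullet> z) \<le> t \<bullet> z" using assms z by simp
  moreover have "t \<bullet> z > 0" using omega_pos z by force
  ultimately have c1: "c \<le> 1" by simp
  obtain w where w: "w \<noteq> 0" "s \<bullet> w \<ge> omega w P" using ext_dir assms(2) by blast
  have "t \<bullet> w \<le> omega w P" using omega_ge finP assms(1) ext_sub by blast
  hence "t \<bullet> w \<le> c * (t \<bullet> w)" using assms w by simp
  moreover have "c * (t \<bullet> w) > 0" using omega_pos w assms by force
  ultimately have "c \<ge> 1" using assms(4)
    by (metis mult_le_cancel_right1 zero_less_mult_pos) 
  thus ?thesis using c1 by simp
qed

lemma ext_cross: "t \<in> E \<Longrightarrow> \<exists>s\<in>E. cr t s > 0"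
proof -
  assume "t \<in> E"
  hence "\<i> * t \<noteq> 0" using ext_nz by simp
  then obtain s where "s \<in> E" "s \<bullet> (\<i> * t) = omega (\<i> * t) P" using ext_max by blast
  moreover have "omega (\<i> * t) P > 0" using omega_pos \<open>\<i> * t \<noteq> 0\<close> by blast
  ultimately show ?thesis by (metis cr_rot)
qed

lemma succ_ex:
  assumes "t \<in> E"
  shows "\<exists>t'. ccw_succ P t t' \<and> 0 < ccw_angle t t' \<and> ccw_angle t t' < pi"
proof -
  obtain s where s: "s \<in> E" "cr t s > 0" using ext_cross assms by blast
  have "s \<noteq> t" using s by (auto simp: cr_def)
  have "finite (E - {t})" using finE by simp
  moreover have "E - {t} \<noteq> {}" using s \<open>s \<noteq> t\<close> by blast
  ultimately obtain t' where t': "t' \<in> E - {t}" "\<forall>y\<in>E - {t}. ccw_angle t t' \<le> ccw_angle t y"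
    using arg_min_ex[of "E - {t}" "ccw_angle t"] by blast
  have succ: "ccw_succ P t t'" unfolding ccw_succ_def using t' assms by blast
  have sp: "0 < ccw_angle t s \<and> ccw_angle t s < pi" using cross_pos_iff s ext_nz assms by blast
  have lt: "ccw_angle t t' < pi" using t' s \<open>s \<noteq> t\<close> sp by force
  have "ccw_angle t t' \<noteq> 0"
  proof
    assume "ccw_angle t t' = 0"
    hence "Arg t' = Arg t" using Arg_bounded[of t] Arg_bounded[of t']
      unfolding ccw_angle_def Let_def by (auto split: if_splits)
    hence eq: "t' = (cmod t' / cmod t) *\<^sub>R t" using arg_eq_scale ext_nz assms by blast
    have "cmod t' / cmod t > 0" using ext_nz assms t' by auto
    hence "cmod t' / cmod t = 1" using ext_ray[OF assms _ eq] t' by blast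
    hence "t' = t" using eq by (metis scaleR_one)
    thus False using t' by auto
  qed
  hence "0 < ccw_angle t t'" using ccw_bounds[of t t'] by linarith
  thus ?thesis using succ lt by blast
qed

end



lemma inner_sgn: "v \<bullet> sgn r = (v \<bullet> r) / cmod r"
  unfolding inner_complex_def by (simp add: add_divide_distrib)

lemma ext_range_mem: "t \<in> ext_range P a b \<longleftrightarrow> t \<in> extreme_pts P \<and> ccw_angle a t \<le> ccw_angle a b"
  unfolding ext_range_def by simp

lemma covering:
  assumes "cs \<noteq> []" "\<forall>i<length cs. 0 < ccw_angle (cs!i) (cs!((i+1) mod length cs))"
  shows "\<exists>i<length cs. ccw_angle (cs!i) t \<le> ccw_angle (cs!i) (cs!((i+1) mod length cs))"
proof (rule ccontr)
  let ?n = "length cs"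
  define \<phi> where "\<phi> k = ccw_angle (cs!k) t" for k
  assume "\<not> ?thesis"
  hence H: "\<forall>i<?n. ccw_angle (cs!i) (cs!((i+1) mod ?n)) < \<phi> i" unfolding \<phi>_def by auto
  have dec: "\<phi> ((i+1) mod ?n) < \<phi> i" if "i < ?n" for i
  proof -
    have "ccw_angle (cs!((i+1) mod ?n)) t = \<phi> i - ccw_angle (cs!i) (cs!((i+1) mod ?n))"
      using ccw_add[of "cs!i" "cs!((i+1) mod ?n)" t] H that unfolding \<phi>_def by force
    thus ?thesis using assms(2) that unfolding \<phi>_def by force
  qed
  have le: "k < ?n \<Longrightarrow> \<phi> k \<le> \<phi> 0" for k
  proof (induction k)
    case 0 thus ?case by simp
  next
    case (Suc k)
    hence "\<phi> (Suc k) < \<phi> k" using dec[of k] by simp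
    thus ?case using Suc by simp
  qed
  have n0: "?n > 0" using assms by simp
  have "\<phi> ((?n - 1 + 1) mod ?n) < \<phi> (?n - 1)" using dec[of "?n - 1"] n0 by simp
  moreover have "(?n - 1 + 1) mod ?n = 0" using n0 by simp
  ultimately show False using le[of "?n - 1"] n0 by simp
qed

context setting begin

lemma cand_sub: "candidates P eps \<subseteq> P"
  unfolding candidates_def using ext_sub by auto

lemma cand_nz: "c \<in> candidates P eps \<Longrightarrow> c \<noteq> 0"
proof -
  assume c: "c \<in> candidates P eps"
  show "c \<noteq> 0"
  proof (cases "c \<in> E")
    case True thus ?thesis using ext_nz by blast
  next
    case False
    then obtain t x where "t \<bullet> x > 0" "c \<bullet> x \<ge> (1 - eps) * (t \<bullet> x)"
      using c unfolding candidates_def by blast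
    hence "c \<bullet> x > 0" using eps1 by (smt (verit) mult_pos_pos)
    thus ?thesis by auto
  qed
qed

lemma cand:
  assumes q: "q \<in> P" and x: "x \<noteq> 0" and qx: "q \<bullet> x \<ge> (1 - eps) * omega x P"
  shows "q \<in> candidates P eps"
proof (cases "q \<in> E")
  case True thus ?thesis unfolding candidates_def by simp
next
  case False
  have wp: "omega x P > 0" using omega_pos x by blast
  have "E \<noteq> {}" using ext_max[of 1] by auto
  then obtain t where t: "t \<in> E" "\<forall>s\<in>E. ccw_angle t q \<le> ccw_angle s q"
    using arg_min_ex[of E "\<lambda>t. ccw_angle t q"] finE by blast
  obtain t' where t': "ccw_succ P t t'" "0 < ccw_angle t t'" "ccw_angle t t' < pi"
    using succ_ex t by blast
  have t'E: "t' \<in> E" "t' \<noteq> t" using t' unfolding ccw_succ_def by auto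
  have le: "ccw_angle t q \<le> ccw_angle t t'"
  proof (rule ccontr)
    assume "\<not> ?thesis"
    hence "ccw_angle t' q = ccw_angle t q - ccw_angle t t'" using ccw_add[of t t' q] by simp
    hence "ccw_angle t' q < ccw_angle t q" using t' by simp
    thus False using t t'E by force
  qed
  have tnz: "t \<noteq> 0" "t' \<noteq> 0" using ext_nz t t'E by auto
  have ctt: "cr t t' > 0" using cone(1)[OF tnz t'(2,3) le] .
  obtain \<alpha> \<beta> where ab: "\<alpha> \<ge> 0" "\<beta> \<ge> 0" "\<forall>z. q \<bullet> z = \<alpha> * (t \<bullet> z) + \<beta> * (t' \<bullet> z)"
    using cone(4)[OF tnz t'(2,3) le] by blast
  have sum: "\<alpha> + \<beta> \<ge> 1 - eps"
  proof (rule ccontr)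
    assume ns: "\<not> (\<alpha> + \<beta> \<ge> 1 - eps)"
    have "t \<bullet> x \<le> omega x P" "t' \<bullet> x \<le> omega x P"
      using omega_ge finP ext_sub t t'E by blast+
    hence "q \<bullet> x \<le> (\<alpha> + \<beta>) * omega x P" using ab
      by (simp add: distrib_right add_mono mult_left_mono)
    also have "\<dots> < (1 - eps) * omega x P" using ns wp by simp
    finally show False using qx by simp
  qed
  define r where "r = - \<i> * (t' - t)"
  have rnz: "r \<noteq> 0" using t'E unfolding r_def by simp
  have tr: "t \<bullet> r = cr t t'" "t' \<bullet> r = cr t t'"
    unfolding r_def cr_normal by (simp_all add: cr_def algebra_simps)
  have qr: "q \<bullet> r = (\<alpha> + \<beta>) * cr t t'" using ab(3) tr by (simp add: algebra_simps)
  have "q \<bullet> r \<ge> (1 - eps) * (t \<bullet> r)" using qr tr sum ctt by (simp add: mult_right_mono)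
  hence "q \<bullet> sgn r \<ge> (1 - eps) * (t \<bullet> sgn r)" using rnz by (simp add: inner_sgn divide_right_mono)
  moreover have "norm (sgn r) = 1" using rnz by (simp add: norm_sgn)
  moreover have "t \<bullet> sgn r = t' \<bullet> sgn r" "t \<bullet> sgn r > 0" using tr ctt rnz by (simp_all add: inner_sgn)
  ultimately show ?thesis unfolding candidates_def using q False t'(1) by blast
qed

end

lemma xstar_props:
  assumes "cr a b > 0"
  shows "norm (xstar a b) = 1" "a \<bullet> xstar a b = b \<bullet> xstar a b" "a \<bullet> xstar a b > 0"
    "\<And>v. cr (b - a) (v - a) \<ge> 0 \<Longrightarrow> v \<bullet> xstar a b \<le> a \<bullet> xstar a b"
proof -
  define r where "r = - \<i> * (b - a)"
  have rnz: "r \<noteq> 0" using assms unfolding r_def by (auto simp: cr_def)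
  have tr: "a \<bullet> r = cr a b" "b \<bullet> r = cr a b"
    unfolding r_def cr_normal by (simp_all add: cr_def algebra_simps)
  have "\<exists>x. norm x = 1 \<and> a \<bullet> x = b \<bullet> x \<and> a \<bullet> x \<ge> 0"
    using rnz tr assms by (intro exI[of _ "sgn r"]) (simp add: inner_sgn norm_sgn)
  hence X: "norm (xstar a b) = 1 \<and> a \<bullet> xstar a b = b \<bullet> xstar a b \<and> a \<bullet> xstar a b \<ge> 0"
    unfolding xstar_def by (rule someI_ex)
  thus "norm (xstar a b) = 1" "a \<bullet> xstar a b = b \<bullet> xstar a b" by auto
  define x where "x = xstar a b"
  define u where "u = b - a"
  have ux: "u \<bullet> x = 0" using X unfolding u_def x_def by (simp add: inner_diff_left)
  have unz: "(cmod u)^2 > 0" using rnz unfolding u_def r_def by simp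
  have "(cr u x)^2 = (cmod u)^2" using lagrange2[of u x] X ux unfolding x_def by simp
  hence cnz: "cr u x \<noteq> 0" using unz by auto
  have "(cmod u)^2 * (a \<bullet> x) = cr u a * cr u x" using lagrange[of u a x] ux by simp
  moreover have "cr u a = - cr a b" unfolding u_def cr_def by (simp add: algebra_simps)
  ultimately have eq: "(cmod u)^2 * (a \<bullet> x) = - cr a b * cr u x" by simp
  have "cr u x < 0"
  proof (rule ccontr)
    assume "\<not> cr u x < 0"
    hence "cr u x > 0" using cnz by simp
    hence "(cmod u)^2 * (a \<bullet> x) < 0" using eq assms by (simp add: mult_pos_pos)
    thus False using X unz unfolding x_def by (simp add: mult_less_0_iff)
  qed
  hence "cr a b * cr u x < 0" using assms by (simp add: mult_pos_neg)
  hence "(cmod u)^2 * (a \<bullet> x) > 0" using eq by simp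
  thus "a \<bullet> xstar a b > 0" using unz unfolding x_def by (simp add: zero_less_mult_iff)
  fix v
  assume "cr (b - a) (v - a) \<ge> 0"
  have "(cmod u)^2 * ((v - a) \<bullet> x) = cr u (v - a) * cr u x" using lagrange[of u "v - a" x] ux by simp
  also have "\<dots> \<le> 0" using \<open>cr u x < 0\<close> \<open>cr (b - a) (v - a) \<ge> 0\<close> unfolding u_def
    by (simp add: mult_nonneg_nonpos)
  finally have "(v - a) \<bullet> x \<le> 0" using unz by (simp add: mult_le_0_iff)
  thus "v \<bullet> xstar a b \<le> a \<bullet> xstar a b" unfolding x_def by (simp add: inner_diff_left)
qed




lemma omega_cont: "finite Q \<Longrightarrow> Q \<noteq> {} \<Longrightarrow> continuous_on S (\<lambda>x. omega x Q)"
proof (induction Q rule: finite_ne_induct)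
  case (singleton p) thus ?case unfolding omega_def by (simp add: continuous_on_inner continuous_on_id continuous_on_const)
next
  case (insert p F)
  have "omega x (insert p F) = max (p \<bullet> x) (omega x F)" for x
    unfolding omega_def using insert by (simp add: Max_insert)
  thus ?case using insert by (simp add: continuous_on_max continuous_on_inner continuous_on_id continuous_on_const)
qed

context setting begin

lemma edge_cover:
  assumes e: "G_edge P eps a b" and t: "t \<in> E" "ccw_angle a t \<le> ccw_angle a b"
    and x: "x \<noteq> 0" "t \<bullet> x = omega x P"
  shows "\<exists>c\<in>{a,b}. c \<bullet> x \<ge> (1 - eps) * (t \<bullet> x)"
proof -
  have ab: "a \<in> candidates P eps" "b \<in> candidates P eps" "0 < ccw_angle a b" "ccw_angle a b < pi"
    "l_edge P a b \<le> eps" using e unfolding G_edge_def by auto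
  have nz: "a \<noteq> 0" "b \<noteq> 0" using cand_nz ab by auto
  have crab: "cr a b > 0" using cone(1)[OF nz ab(3,4) t(2)] .
  obtain \<alpha> \<beta> where al: "\<alpha> \<ge> 0" "\<beta> \<ge> 0" "\<forall>z. t \<bullet> z = \<alpha> * (a \<bullet> z) + \<beta> * (b \<bullet> z)"
    using cone(4)[OF nz ab(3,4) t(2)] by blast
  define xs where "xs = xstar a b"
  define h where "h = a \<bullet> xs"
  have hp: "h > 0" "b \<bullet> xs = h" using xstar_props[OF crab] unfolding h_def xs_def by auto
  have txs: "t \<bullet> xs = (\<alpha> + \<beta>) * h" using al(3) hp by (simp add: h_def algebra_simps)
  have "\<alpha> + \<beta> > 0"
  proof (rule ccontr)
    assume "\<not> ?thesis"
    hence "\<alpha> = 0" "\<beta> = 0" using al by auto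
    hence "t \<bullet> t = 0" using al(3) by simp
    thus False using ext_nz t by simp
  qed
  hence txp: "t \<bullet> xs > 0" using txs hp by simp
  have tr: "t \<in> ext_range P a b" using t by (simp add: ext_range_mem)
  have fr: "finite (ext_range P a b)" using finE unfolding ext_range_def by simp
  have "1 - (a \<bullet> xs) / (t \<bullet> xs) \<le> l_edge P a b"
    unfolding l_edge_def xs_def using tr fr by (auto intro!: Max_ge)
  hence "1 - h / (t \<bullet> xs) \<le> eps" using ab(5) unfolding h_def by simp
  hence "(1 - eps) * (t \<bullet> xs) \<le> h" using txp by (simp add: field_simps)
  hence "(1 - eps) * (\<alpha> + \<beta>) * h \<le> 1 * h" using txs by (simp add: mult.assoc)
  hence s1: "(1 - eps) * (\<alpha> + \<beta>) \<le> 1" using hp by (simp add: mult_le_cancel_right)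
  define M where "M = max (a \<bullet> x) (b \<bullet> x)"
  have "t \<bullet> x \<le> \<alpha> * M + \<beta> * M" using al unfolding M_def
    by (simp add: add_mono mult_left_mono)
  moreover have tpos: "t \<bullet> x > 0" using x omega_pos by simp
  ultimately have Mp: "M > 0" using al
    by (smt (verit, ccfv_SIG) mult_nonneg_nonpos)
  have "(1 - eps) * (t \<bullet> x) \<le> (1 - eps) * ((\<alpha> + \<beta>) * M)"
    using \<open>t \<bullet> x \<le> \<alpha> * M + \<beta> * M\<close> eps1 by (simp add: distrib_right)
  also have "\<dots> = ((1 - eps) * (\<alpha> + \<beta>)) * M" by simp
  also have "\<dots> \<le> 1 * M" using s1 Mp by (intro mult_right_mono) auto
  finally have "(1 - eps) * (t \<bullet> x) \<le> M" by simp
  thus ?thesis unfolding M_def by (cases "a \<bullet> x \<le> b \<bullet> x") (auto simp: max_def)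
qed

lemma sound:
  assumes C: "G_cycle P eps C"
  shows "regret_set P eps (set C)"
proof -
  have C1: "C \<noteq> []" "set C \<subseteq> candidates P eps"
    "\<forall>i<length C. G_edge P eps (C ! i) (C ! ((i + 1) mod length C))"
    using C unfolding G_cycle_def by auto
  have sub: "set C \<subseteq> P" using C1 cand_sub by blast
  have "max_regret P (set C) \<le> eps"
    unfolding max_regret_def
  proof (rule cSUP_least)
    show "sphere (0::complex) 1 \<noteq> {}" by (metis norm_one mem_sphere_0 empty_iff)
    fix x :: complex assume "x \<in> sphere 0 1"
    hence x0: "x \<noteq> 0" by auto
    obtain t where t: "t \<in> E" "t \<bullet> x = omega x P" using ext_max x0 by blast
    have angs: "\<forall>i<length C. 0 < ccw_angle (C!i) (C!((i+1) mod length C))"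
      using C1(3) unfolding G_edge_def by blast
    obtain i where i: "i < length C" "ccw_angle (C!i) t \<le> ccw_angle (C!i) (C!((i+1) mod length C))"
      using covering[OF C1(1) angs] by blast
    obtain c where c: "c \<in> {C!i, C!((i+1) mod length C)}" "c \<bullet> x \<ge> (1 - eps) * (t \<bullet> x)"
      using edge_cover[OF _ t(1) i(2) x0 t(2)] C1(3) i(1) by blast
    have "c \<in> set C" using c(1) i(1) C1(1) by auto
    hence "c \<bullet> x \<le> omega x (set C)" using omega_ge by blast
    hence "(1 - eps) * omega x P \<le> omega x (set C)" using c t by simp
    moreover have "omega x P > 0" using omega_pos x0 by blast
    ultimately show "regret_ratio P x (set C) \<le> eps"
      unfolding regret_ratio_def by (simp add: field_simps)
  qed
  thus ?thesis unfolding regret_set_def using C1 sub by auto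
qed

lemma RS:
  assumes Q: "regret_set P eps Q" and x: "x \<noteq> 0"
  shows "omega x Q \<ge> (1 - eps) * omega x P"
proof -
  have Q1: "Q \<noteq> {}" "Q \<subseteq> P" "max_regret P Q \<le> eps" using Q unfolding regret_set_def by auto
  have fQ: "finite Q" using Q1 finP finite_subset by blast
  have nzs: "\<forall>x\<in>sphere 0 1. omega x P \<noteq> 0"
  proof
    fix x :: complex assume "x \<in> sphere 0 1"
    hence "x \<noteq> 0" by auto
    thus "omega x P \<noteq> 0" using omega_pos by force
  qed
  have c1: "continuous_on (sphere 0 1) (\<lambda>x. omega x Q)" by (rule omega_cont[OF fQ Q1(1)])
  have c2: "continuous_on (sphere 0 1) (\<lambda>x. omega x P)" by (rule omega_cont[OF finP neP])
  have c3: "continuous_on (sphere 0 1) (\<lambda>x. omega x Q / omega x P)"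
    by (rule continuous_on_divide[OF c1 c2]) (use nzs in blast)
  have "continuous_on (sphere 0 1) (\<lambda>x. 1 - omega x Q / omega x P)"
    by (rule continuous_on_diff[OF continuous_on_const c3])
  hence "continuous_on (sphere 0 1) (\<lambda>x. regret_ratio P x Q)" unfolding regret_ratio_def .
  hence "compact ((\<lambda>x. regret_ratio P x Q) ` sphere 0 1)"
    by (intro compact_continuous_image) auto
  hence bdd: "bdd_above ((\<lambda>x. regret_ratio P x Q) ` sphere 0 1)"
    by (intro bounded_imp_bdd_above compact_imp_bounded)
  have sx: "sgn x \<in> sphere 0 1" using x by (simp add: norm_sgn)
  have "regret_ratio P (sgn x) Q \<le> max_regret P Q"
    unfolding max_regret_def by (rule cSUP_upper[OF sx bdd])
  hence "1 - omega (sgn x) Q / omega (sgn x) P \<le> eps" using Q1 unfolding regret_ratio_def by simp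
  hence le1: "1 - eps \<le> omega (sgn x) Q / omega (sgn x) P" by linarith
  have sx0: "sgn x \<noteq> 0" using x by (simp add: sgn_zero_iff)
  have wp: "omega (sgn x) P > 0" by (rule omega_pos[OF sx0])
  have "(1 - eps) * omega (sgn x) P \<le> omega (sgn x) Q" using le1 wp by (simp add: pos_le_divide_eq)
  hence ineq: "cmod x * ((1 - eps) * omega (sgn x) P) \<le> cmod x * omega (sgn x) Q"
    by (simp add: mult_left_mono)
  have eq: "cmod x *\<^sub>R sgn x = x" unfolding sgn_eq scaleR_conv_of_real using x by simp
  have oe: "omega x P = cmod x * omega (sgn x) P" "omega x Q = cmod x * omega (sgn x) Q"
    using omega_scale[OF finP neP, of "cmod x" "sgn x"] omega_scale[OF fQ Q1(1), of "cmod x" "sgn x"]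
    unfolding eq by simp_all
  show ?thesis using ineq unfolding oe by (simp add: algebra_simps)
qed

end



lemma func_cycle:
  assumes V: "finite V" "q0 \<in> V" "\<forall>q\<in>V. f q \<in> V"
  shows "\<exists>cs. cs \<noteq> [] \<and> distinct cs \<and> set cs \<subseteq> V \<and>
           (\<forall>i<length cs. cs!((i+1) mod length cs) = f (cs!i))"
proof -
  define g where "g n = (f^^n) q0" for n
  have gS: "g (Suc n) = f (g n)" for n unfolding g_def by simp
  have gV: "g n \<in> V" for n
  proof (induction n)
    case 0 show ?case using V(2) by (simp add: g_def)
  next
    case (Suc n) thus ?case using V(3) gS[of n] by simp
  qed
  have "\<not> inj_on g {..card V}"
  proof
    assume "inj_on g {..card V}"
    hence "card (g ` {..card V}) = card V + 1" by (simp add: card_image)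
    moreover have "g ` {..card V} \<subseteq> V" using gV by blast
    hence "card (g ` {..card V}) \<le> card V" using V(1) by (rule card_mono[rotated])
    ultimately show False by simp
  qed
  then obtain a b where ab: "a \<noteq> b" "g a = g b" unfolding inj_on_def by blast
  have ex: "\<exists>j. \<exists>i<j. g i = g j"
  proof (cases "a < b")
    case True thus ?thesis using ab by blast
  next
    case False hence "b < a" using ab(1) by simp
    thus ?thesis using ab(2) by (intro exI[of _ a] exI[of _ b]) simp
  qed
  define j0 where "j0 = (LEAST j. \<exists>i<j. g i = g j)"
  obtain i0 where i0: "i0 < j0" "g i0 = g j0" using LeastI_ex[OF ex] unfolding j0_def by blast
  have minj: "g i \<noteq> g j" if "j < j0" "i < j" for i j
  proof -
    have "\<not> (\<exists>i<j. g i = g j)" using not_less_Least[of j "\<lambda>j. \<exists>i<j. g i = g j"] that(1)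
      unfolding j0_def by blast
    thus ?thesis using that(2) by blast
  qed
  define cs where "cs = map g [i0..<j0]"
  have len: "length cs = j0 - i0" unfolding cs_def by simp
  have nth: "cs!k = g (i0 + k)" if "k < j0 - i0" for k using that unfolding cs_def by simp
  have inj: "inj_on g {i0..<j0}"
    unfolding inj_on_def
  proof (intro ballI impI)
    fix a b assume a: "a \<in> {i0..<j0}" and b: "b \<in> {i0..<j0}" and e: "g a = g b"
    show "a = b"
    proof (rule ccontr)
      assume "a \<noteq> b"
      hence "a < b \<or> b < a" by linarith
      thus False
      proof
        assume "a < b" thus False using minj[of b a] b e by simp
      next
        assume "b < a" thus False using minj[of a b] a e by simp
      qed
    qed
  qed
  show ?thesis
  proof (intro exI conjI allI impI)
    show "cs \<noteq> []" using i0 unfolding cs_def by simp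
    show "set cs \<subseteq> V" unfolding cs_def using gV by auto
    show "distinct cs" unfolding cs_def using inj by (simp add: distinct_map)
    fix k assume k: "k < length cs"
    show "cs!((k+1) mod length cs) = f (cs!k)"
    proof (cases "k + 1 < length cs")
      case True
      hence "(k+1) mod length cs = k + 1" by simp
      thus ?thesis using nth[of "k+1"] nth[of k] len k True gS[of "i0 + k"] by simp
    next
      case False
      hence kk: "k + 1 = length cs" using k by simp
      hence "(k+1) mod length cs = 0" by simp
      moreover have "cs!0 = g i0" using nth[of 0] i0 by simp
      moreover have "j0 = Suc (i0 + k)" using kk len i0 by simp
      hence "g j0 = f (g (i0 + k))" using gS[of "i0 + k"] by simp
      ultimately show ?thesis using i0 nth[of k] k len by simp
    qed
  qed
qed

lemma wrap:
  assumes fin: "finite Q" and q: "q \<in> Q" and ne: "Q - {q} \<noteq> {}" and c: "c \<noteq> 0"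
    and key: "\<forall>p\<in>Q-{q}. lo < Arg ((p - q) * c) \<and> Arg ((p - q) * c) \<le> lo + pi"
  shows "\<exists>q''\<in>Q-{q}. \<forall>p\<in>Q. cr (q'' - q) (p - q) \<ge> 0"
proof -
  obtain q'' where q'': "q'' \<in> Q - {q}" "\<forall>p\<in>Q-{q}. Arg ((q'' - q) * c) \<le> Arg ((p - q) * c)"
    using arg_min_ex[of "Q - {q}" "\<lambda>p. Arg ((p - q) * c)"] fin ne by blast
  have "cr (q'' - q) (p - q) \<ge> 0" if p: "p \<in> Q" for p
  proof (cases "p = q")
    case True thus ?thesis by (simp add: cr_def)
  next
    case False
    hence pq: "p \<in> Q - {q}" using p by simp
    have k1: "lo < Arg ((q'' - q) * c)" using key q''(1) by blast
    have k2: "Arg ((p - q) * c) \<le> lo + pi" using key pq by blast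
    have k3: "Arg ((q'' - q) * c) \<le> Arg ((p - q) * c)" using q''(2) pq by blast
    have "sin (Arg ((p - q) * c) - Arg ((q'' - q) * c)) \<ge> 0"
      using k1 k2 k3 by (intro sin_ge_zero) linarith+
    hence "cr ((q'' - q) * c) ((p - q) * c) \<ge> 0" by (simp add: cross_sin)
    hence "(cmod c)^2 * cr (q'' - q) (p - q) \<ge> 0" by (simp add: cr_mult)
    moreover have "(cmod c)^2 > 0" using c by simp
    ultimately show ?thesis by (simp add: zero_le_mult_iff)
  qed
  thus ?thesis using q'' by blast
qed

lemma collinear:
  assumes "cr u v = 0" "u \<noteq> 0"
  shows "v = ((u \<bullet> v) / (cmod u)^2) *\<^sub>R u"
proof -
  have n: "(cmod u)^2 \<noteq> 0" using assms by simp
  have "(cmod u)^2 * Re v = (u \<bullet> v) * Re u" "(cmod u)^2 * Im v = (u \<bullet> v) * Im u"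
    using assms(1) unfolding cr_def inner_complex_def cmod_power2
    by (simp_all add: algebra_simps power2_eq_square)
  thus ?thesis using n by (simp add: complex_eq_iff field_simps)
qed


lemma cr_lin: "cr u (p - q) = cr u p - cr u q" unfolding cr_def by (simp add: algebra_simps)

context setting begin

lemma Q_facts:
  assumes "regret_set P eps Q"
  shows "finite Q" "Q \<subseteq> P" "Q \<noteq> {}" "\<And>y. y \<noteq> 0 \<Longrightarrow> omega y Q > 0"
proof -
  show Q1: "Q \<subseteq> P" "Q \<noteq> {}" using assms unfolding regret_set_def by auto
  thus "finite Q" using finP finite_subset by blast
  fix y :: complex assume "y \<noteq> 0"
  hence "omega y Q \<ge> (1 - eps) * omega y P" "omega y P > 0" using RS assms omega_pos by auto
  thus "omega y Q > 0" using eps1 by (smt (verit) mult_pos_pos)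
qed

lemma Q_two:
  assumes "regret_set P eps Q" "q \<in> Q"
  shows "Q - {q} \<noteq> {}"
proof
  assume e: "Q - {q} = {}"
  define y where "y = (if q = 0 then 1 else - q)"
  have y0: "y \<noteq> 0" unfolding y_def by auto
  have "q \<bullet> y \<le> 0" unfolding y_def by auto
  obtain p where "p \<in> Q" "p \<bullet> y = omega y Q" using omega_attained Q_facts[OF assms(1)] by metis
  moreover have "p = q" using e \<open>p \<in> Q\<close> by blast
  ultimately have "omega y Q \<le> 0" using \<open>q \<bullet> y \<le> 0\<close> by simp
  thus False using Q_facts(4)[OF assms(1) y0] by simp
qed

lemma edge_from_wrap:
  assumes Q: "regret_set P eps Q" and q: "q \<in> Q" "q' \<in> Q" "q' \<noteq> q"
    and W: "\<forall>p\<in>Q. cr (q' - q) (p - q) \<ge> 0"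
  shows "G_edge P eps q q'"
proof -
  note QF = Q_facts[OF Q]
  define r where "r = - \<i> * (q' - q)"
  have rnz: "r \<noteq> 0" using q unfolding r_def by simp
  have "\<forall>p\<in>Q. p \<bullet> r \<le> q \<bullet> r"
  proof
    fix p assume "p \<in> Q"
    have "p \<bullet> r - q \<bullet> r = - cr (q' - q) (p - q)" unfolding r_def cr_normal cr_lin by simp
    thus "p \<bullet> r \<le> q \<bullet> r" using W \<open>p \<in> Q\<close> by force
  qed
  hence "omega r Q \<le> q \<bullet> r" using omega_le QF by blast
  hence "q \<bullet> r > 0" using QF(4)[OF rnz] by simp
  moreover have "q \<bullet> r = cr q q'" unfolding r_def cr_normal by (simp add: cr_def algebra_simps)
  ultimately have crq: "cr q q' > 0" by simp
  have nz: "q \<noteq> 0" "q' \<noteq> 0" using crq by (auto simp: cr_def)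
  have ang: "0 < ccw_angle q q'" "ccw_angle q q' < pi" using cross_pos_iff nz crq by auto
  define xs where "xs = xstar q q'"
  define h where "h = q \<bullet> xs"
  note XP = xstar_props[OF crq]
  have hp: "h > 0" "q' \<bullet> xs = h" using XP unfolding h_def xs_def by auto
  have xs0: "xs \<noteq> 0" using XP(1) unfolding xs_def by auto
  have "\<forall>p\<in>Q. p \<bullet> xs \<le> h" using XP(4) W unfolding h_def xs_def by blast
  hence "omega xs Q \<le> h" using omega_le QF by blast
  hence hge: "(1 - eps) * omega xs P \<le> h" using RS[OF Q xs0] by simp
  have qP: "q \<in> P" "q' \<in> P" using q QF by auto
  have cq: "q \<in> candidates P eps" using cand[OF qP(1) xs0] hge unfolding h_def by simp
  have cq': "q' \<in> candidates P eps" using cand[OF qP(2) xs0] hge hp by simp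
  have "l_edge P q q' \<le> eps"
  proof (cases "ext_range P q q' = {}")
    case True thus ?thesis unfolding l_edge_def using eps0 by simp
  next
    case False
    have fr: "finite (ext_range P q q')" using finE unfolding ext_range_def by simp
    have "\<forall>t\<in>ext_range P q q'. 1 - h / (t \<bullet> xs) \<le> eps"
    proof
      fix t assume "t \<in> ext_range P q q'"
      hence t: "t \<in> E" "ccw_angle q t \<le> ccw_angle q q'" by (auto simp: ext_range_mem)
      obtain \<alpha> \<beta> where al: "\<alpha> \<ge> 0" "\<beta> \<ge> 0" "\<forall>z. t \<bullet> z = \<alpha> * (q \<bullet> z) + \<beta> * (q' \<bullet> z)"
        using cone(4)[OF nz ang t(2)] by blast
      have txs: "t \<bullet> xs = (\<alpha> + \<beta>) * h" using al(3) hp by (simp add: h_def algebra_simps)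
      have "\<alpha> + \<beta> > 0"
      proof (rule ccontr)
        assume "\<not> ?thesis"
        hence "\<alpha> = 0" "\<beta> = 0" using al by auto
        hence "t \<bullet> t = 0" using al(3) by simp
        thus False using ext_nz t by simp
      qed
      hence txp: "t \<bullet> xs > 0" using txs hp by simp
      have "t \<bullet> xs \<le> omega xs P" using omega_ge finP ext_sub t(1) by blast
      hence "(1 - eps) * (t \<bullet> xs) \<le> h" using hge eps1
        by (smt (verit) mult_left_mono)
      thus "1 - h / (t \<bullet> xs) \<le> eps" using txp by (simp add: field_simps)
    qed
    thus ?thesis unfolding l_edge_def h_def xs_def using False fr by simp
  qed
  thus ?thesis unfolding G_edge_def using cq cq' q ang by auto
qed

end



context setting begin

lemma opt:
  assumes Q: "regret_set P eps Q"
  shows "\<exists>cs. G_cycle P eps cs \<and> length cs \<le> card Q"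
proof -
  note QF = Q_facts[OF Q]
  define W where "W q = {q' \<in> Q. q' \<noteq> q \<and> (\<forall>p\<in>Q. cr (q' - q) (p - q) \<ge> 0)}" for q
  define V where "V = {q \<in> Q. W q \<noteq> {}}"
  define f where "f q = (SOME q'. q' \<in> W q \<and> (\<forall>q''\<in>W q. cmod (q'' - q) \<le> cmod (q' - q)))" for q
  have fW: "f q \<in> W q \<and> (\<forall>q''\<in>W q. cmod (q'' - q) \<le> cmod (f q - q))" if "q \<in> V" for q
  proof -
    have "finite (W q)" using QF(1) unfolding W_def by simp
    moreover have "W q \<noteq> {}" using that V_def by simp
    ultimately obtain m where "m \<in> W q" "\<forall>y\<in>W q. cmod (y - q) \<le> cmod (m - q)"
      using arg_max_ex[of "W q" "\<lambda>y. cmod (y - q)"] by blast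
    hence "\<exists>m. m \<in> W q \<and> (\<forall>y\<in>W q. cmod (y - q) \<le> cmod (m - q))" by blast
    from someI_ex[OF this] show ?thesis unfolding f_def .
  qed
  have edge: "G_edge P eps q (f q)" if "q \<in> V" for q
    using edge_from_wrap[OF Q, of q "f q"] fW[OF that] that unfolding W_def V_def by auto
  have fV: "f q \<in> V" if qV: "q \<in> V" for q
  proof -
    define q' where "q' = f q"
    define u where "u = q' - q"
    have q'W: "q' \<in> Q" "q' \<noteq> q" "\<forall>p\<in>Q. cr u (p - q) \<ge> 0"
      using fW[OF qV] unfolding W_def q'_def u_def by auto
    have u0: "u \<noteq> 0" using q'W u_def by auto
    have maxp: "\<forall>q''\<in>W q. cmod (q'' - q) \<le> cmod u" using fW[OF qV] unfolding q'_def u_def by blast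
    have key: "\<forall>p\<in>Q-{q'}. 0 < Arg ((p - q') * cnj u) \<and> Arg ((p - q') * cnj u) \<le> 0 + pi"
    proof
      fix p assume p: "p \<in> Q - {q'}"
      define z where "z = (p - q') * cnj u"
      have qq: "q' = q + u" unfolding u_def by simp
      have imz: "Im z = cr u (p - q)" unfolding z_def qq cr_def by (simp add: algebra_simps)
      have imz0: "Im z \<ge> 0" using imz q'W(3) p by auto
      show "0 < Arg z \<and> Arg z \<le> 0 + pi"
      proof (cases "Im z > 0")
        case True thus ?thesis using Arg_lt_pi[of z] by auto
      next
        case False
        hence iz: "Im z = 0" using imz0 by simp
        hence cr0: "cr u (p - q) = 0" using imz by simp
        define \<mu> where "\<mu> = (u \<bullet> (p - q)) / (cmod u)^2"
        have pq: "p - q = \<mu> *\<^sub>R u" using collinear[OF cr0 u0] unfolding \<mu>_def .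
        have "\<mu> < 1"
        proof (rule ccontr)
          assume "\<not> \<mu> < 1"
          hence \<mu>1: "\<mu> \<ge> 1" by simp
          have "p \<in> W q" unfolding W_def
          proof (intro CollectI conjI ballI)
            show "p \<in> Q" using p by simp
            show "p \<noteq> q"
            proof
              assume "p = q"
              hence "\<mu> *\<^sub>R u = 0" using pq by simp
              thus False using \<mu>1 u0 by simp
            qed
            fix r assume "r \<in> Q"
            have "cr (p - q) (r - q) = \<mu> * cr u (r - q)" unfolding pq cr_def by (simp add: algebra_simps)
            thus "cr (p - q) (r - q) \<ge> 0" using q'W(3) \<open>r \<in> Q\<close> \<mu>1 by simp
          qed
          hence "cmod (p - q) \<le> cmod u" using maxp by blast
          hence "\<mu> * cmod u \<le> 1 * cmod u" using pq \<mu>1 by simp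
          hence "\<mu> \<le> 1" using u0 by (simp add: mult_le_cancel_right)
          hence "\<mu> = 1" using \<mu>1 by simp
          hence "p - q = u" using pq by simp
          hence "p = q'" using qq by (metis add.commute diff_add_cancel)
          thus False using p by simp
        qed
        have "Re z = (p - q') \<bullet> u" unfolding z_def inner_complex_def by simp
        also have "\<dots> = (p - q) \<bullet> u - u \<bullet> u" unfolding qq by (simp add: inner_diff_left inner_add_right algebra_simps)
        also have "\<dots> = \<mu> * (cmod u)^2 - (cmod u)^2"
          unfolding pq by (simp add: power2_norm_eq_inner)
        finally have "Re z = (\<mu> - 1) * (cmod u)^2" by (simp add: algebra_simps)
        moreover have "(cmod u)^2 > 0" using u0 by simp
        ultimately have "Re z < 0" using \<open>\<mu> < 1\<close> by (simp add: mult_neg_pos)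
        hence "Arg z = pi" using iz Arg_eq_pi by blast
        thus ?thesis by simp
      qed
    qed
    have cu: "cnj u \<noteq> 0" using u0 by simp
    obtain q'' where "q'' \<in> Q - {q'}" "\<forall>p\<in>Q. cr (q'' - q') (p - q') \<ge> 0"
      using wrap[OF QF(1) q'W(1) Q_two[OF Q q'W(1)] cu key] by blast
    hence "q'' \<in> W q'" unfolding W_def by auto
    thus "f q \<in> V" unfolding V_def q'_def using q'W(1) q'_def by auto
  qed
  have V0: "\<exists>q0. q0 \<in> V"
  proof -
    obtain a where a: "a \<in> Q" "\<forall>y\<in>Q. Re y \<le> Re a" using arg_max_ex[of Q Re] QF by blast
    define S0 where "S0 = {p \<in> Q. Re p = Re a}"
    have "finite S0" "S0 \<noteq> {}" using QF(1) a(1) unfolding S0_def by auto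
    then obtain q0 where q0: "q0 \<in> S0" "\<forall>y\<in>S0. Im y \<le> Im q0" using arg_max_ex[of S0 Im] by blast
    have q0Q: "q0 \<in> Q" "Re q0 = Re a" using q0 S0_def by auto
    have key: "\<forall>p\<in>Q-{q0}. -pi < Arg ((p - q0) * \<i>) \<and> Arg ((p - q0) * \<i>) \<le> -pi + pi"
    proof
      fix p assume p: "p \<in> Q - {q0}"
      define z where "z = (p - q0) * \<i>"
      have zz: "Im z = Re p - Re q0" "Re z = Im q0 - Im p" unfolding z_def by simp_all
      have "Re p \<le> Re q0" using a p q0Q by auto
      have "Arg z \<le> 0"
      proof (cases "Re p < Re q0")
        case True hence "Im z < 0" using zz by simp
        thus ?thesis using Arg_neg_iff[of z] by simp
      next
        case False
        hence "Re p = Re q0" using \<open>Re p \<le> Re q0\<close> by simp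
        hence "p \<in> S0" using p q0Q unfolding S0_def by simp
        hence "Im p \<le> Im q0" using q0 by blast
        moreover have "Im p \<noteq> Im q0" using \<open>Re p = Re q0\<close> p complex_eqI by blast
        ultimately have "Re z > 0" using zz by simp
        moreover have "Im z = 0" using zz \<open>Re p = Re q0\<close> by simp
        ultimately have "Arg z = 0" by (simp add: Arg_eq_0 complex_is_Real_iff)
        thus ?thesis by simp
      qed
      thus "-pi < Arg z \<and> Arg z \<le> -pi + pi" using Arg_bounded[of z] by simp
    qed
    have ci: "\<i> \<noteq> 0" by simp
    obtain q'' where "q'' \<in> Q - {q0}" "\<forall>p\<in>Q. cr (q'' - q0) (p - q0) \<ge> 0"
      using wrap[OF QF(1) q0Q(1) Q_two[OF Q q0Q(1)] ci key] by blast
    hence "q'' \<in> W q0" unfolding W_def by auto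
    thus ?thesis unfolding V_def using q0Q(1) by auto
  qed
  have finV: "finite V" using QF(1) unfolding V_def by simp
  obtain q0 where "q0 \<in> V" using V0 by blast
  then obtain cs where cs: "cs \<noteq> []" "distinct cs" "set cs \<subseteq> V"
    "\<forall>i<length cs. cs!((i+1) mod length cs) = f (cs!i)"
    using func_cycle[OF finV, of q0 f] fV by blast
  have "G_cycle P eps cs"
    unfolding G_cycle_def
  proof (intro conjI allI impI)
    show "cs \<noteq> []" "distinct cs" using cs by auto
    show "set cs \<subseteq> candidates P eps" using cs(3) edge unfolding G_edge_def by blast
    fix i assume "i < length cs"
    hence "cs!i \<in> V" using cs(3) nth_mem by blast
    thus "G_edge P eps (cs ! i) (cs ! ((i + 1) mod length cs))" using edge cs(4) \<open>i < length cs\<close> by simp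
  qed
  moreover have "length cs \<le> card Q"
  proof -
    have "length cs = card (set cs)" using cs(2) by (simp add: distinct_card)
    also have "\<dots> \<le> card V" using cs(3) finV by (intro card_mono)
    also have "\<dots> \<le> card Q" using QF(1) unfolding V_def by (intro card_mono) auto
    finally show ?thesis .
  qed
  ultimately show ?thesis by blast
qed

end

theorem theorem2:
  fixes P :: "complex set" and eps :: real and C :: "complex list"
  assumes "finite P" and "P \<noteq> {}" and "standing_cond P"
    and "0 < eps" and "eps < 1"
    and "G_cycle P eps C"
    and "\<forall>C'. G_cycle P eps C' \<longrightarrow> length C \<le> length C'"
  shows "regret_set P eps (set C) \<and>
         (\<forall>Q. regret_set P eps Q \<longrightarrow> card (set C) \<le> card Q)"
proof -
  interpret setting P eps using assms by unfold_locales
  have "card (set C) = length C" using assms(6) unfolding G_cycle_def by (simp add: distinct_card)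
  moreover have "\<forall>Q. regret_set P eps Q \<longrightarrow> length C \<le> card Q"
  proof (intro allI impI)
    fix Q assume "regret_set P eps Q"
    then obtain cs where "G_cycle P eps cs" "length cs \<le> card Q" using opt by blast
    thus "length C \<le> card Q" using assms(7) by force
  qed
  ultimately show ?thesis using sound[OF assms(6)] by simp
qed


end
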